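(* Let $Q$ be a finite loop and $S$ a subloop of $Q$. For $x\in Q$ let $O_x(Q,S)$ denote the orbit of $x$ under the permutation group $\langle R_s : s\in S\rangle$ acting naturally on $Q$, where $R_s:Q\to Q$, $y\mapsto ys$. (i) If $|O_x(Q,S)|$ is a multiple of $|S|$ for every $x\in Q$, then $|S|$ divides $|Q|$. (ii) If $O_x(Q,S)$ can be written as a disjoint union of left cosets of $S$ for every $x\in Q$, then $Q$ has a left coset partition modulo $S$, i.e., there is a subset of the left cosets $\{yS: y\in Q\}$ that partitions $Q$.
   Context: For $y\in Q$, $yS=\{ys:s\in S\}$ is the left coset of $S$ with representative $y$. *)

theory Defs
  imports Main
begin

definition loop :: "'a set \<Rightarrow> ('a \<Rightarrow> 'a \<Rightarrow> 'a) \<Rightarrow> 'a \<Rightarrow> bool" where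
  "loop Q mult e \<longleftrightarrow>
     e \<in> Q \<and>
     (\<forall>x\<in>Q. \<forall>y\<in>Q. mult x y \<in> Q) \<and>
     (\<forall>x\<in>Q. mult e x = x \<and> mult x e = x) \<and>
     (\<forall>a\<in>Q. \<forall>b\<in>Q. \<exists>!x. x \<in> Q \<and> mult a x = b) \<and>
     (\<forall>a\<in>Q. \<forall>b\<in>Q. \<exists>!y. y \<in> Q \<and> mult y a = b)"

definition subloop :: "'a set \<Rightarrow> 'a set \<Rightarrow> ('a \<Rightarrow> 'a \<Rightarrow> 'a) \<Rightarrow> 'a \<Rightarrow> bool" where
  "subloop S Q mult e \<longleftrightarrow> S \<subseteq> Q \<and> loop S mult e"

definition rdiv :: "'a set \<Rightarrow> ('a \<Rightarrow> 'a \<Rightarrow> 'a) \<Rightarrow> 'a \<Rightarrow> 'a \<Rightarrow> 'a" where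
  "rdiv Q mult b a = (THE y. y \<in> Q \<and> mult y a = b)"

text \<open>Orbit of x under the permutation group generated by the right translations
  R_s (s in S) acting on Q: closure of {x} under all R_s and their inverses.\<close>
inductive_set orbit :: "'a set \<Rightarrow> 'a set \<Rightarrow> ('a \<Rightarrow> 'a \<Rightarrow> 'a) \<Rightarrow> 'a \<Rightarrow> 'a set"
  for Q S mult x where
  base: "x \<in> orbit Q S mult x"
| right: "y \<in> orbit Q S mult x \<Longrightarrow> s \<in> S \<Longrightarrow> mult y s \<in> orbit Q S mult x"
| right_inv: "y \<in> orbit Q S mult x \<Longrightarrow> s \<in> S \<Longrightarrow> rdiv Q mult y s \<in> orbit Q S mult x"

definition lcoset :: "('a \<Rightarrow> 'a \<Rightarrow> 'a) \<Rightarrow> 'a \<Rightarrow> 'a set \<Rightarrow> 'a set" where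
  "lcoset mult y S = (\<lambda>s. mult y s) ` S"

definition lcosets :: "'a set \<Rightarrow> 'a set \<Rightarrow> ('a \<Rightarrow> 'a \<Rightarrow> 'a) \<Rightarrow> 'a set set" where
  "lcosets Q S mult = {lcoset mult y S | y. y \<in> Q}"

end

theory Submission
  imports Defs
begin

lemma loopD:
  assumes "loop Q mult e"
  shows "e \<in> Q" "\<And>x y. x\<in>Q \<Longrightarrow> y\<in>Q \<Longrightarrow> mult x y \<in> Q"
    "\<And>a b. a\<in>Q \<Longrightarrow> b\<in>Q \<Longrightarrow> \<exists>!y. y \<in> Q \<and> mult y a = b"
  using assms unfolding loop_def by simp_all

lemma rdiv_props:
  assumes "loop Q mult e" "a \<in> Q" "b \<in> Q"
  shows "rdiv Q mult b a \<in> Q \<and> mult (rdiv Q mult b a) a = b"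
  unfolding rdiv_def by (rule theI') (rule loopD(3)[OF assms])

lemma rdiv_mult:
  assumes "loop Q mult e" "a \<in> Q" "y \<in> Q"
  shows "rdiv Q mult (mult y a) a = y"
  unfolding rdiv_def
  by (rule the1_equality[OF loopD(3)[OF assms(1,2) loopD(2)[OF assms(1,3,2)]]]) (simp add: assms)

lemma orbit_sub:
  assumes "loop Q mult e" "S \<subseteq> Q" "x \<in> Q"
  shows "orbit Q S mult x \<subseteq> Q"
proof
  fix y assume "y \<in> orbit Q S mult x"
  then show "y \<in> Q"
  proof induct
    case base then show ?case using assms by simp
  next
    case (right y s) then show ?case using assms(2) loopD(2)[OF assms(1)] by (meson subsetD)
  next
    case (right_inv y s) then show ?case using assms(2) rdiv_props[OF assms(1)] by (meson subsetD)
  qed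
qed

lemma orbit_trans:
  assumes "z \<in> orbit Q S mult y" "y \<in> orbit Q S mult x"
  shows "z \<in> orbit Q S mult x"
  using assms by induct (auto intro: orbit.intros)

lemma orbit_sym:
  assumes L: "loop Q mult e" and SQ: "S \<subseteq> Q" and xQ: "x \<in> Q"
    and y: "y \<in> orbit Q S mult x"
  shows "x \<in> orbit Q S mult y"
  using y
proof induct
  case base then show ?case by (rule orbit.base)
next
  case (right y s)
  have yQ: "y \<in> Q" using orbit_sub[OF L SQ xQ] right(1) by (rule subsetD)
  have sQ: "s \<in> Q" using SQ right(3) by (rule subsetD)
  have "rdiv Q mult (mult y s) s \<in> orbit Q S mult (mult y s)"
    by (rule orbit.right_inv[OF orbit.base right(3)])
  then have "y \<in> orbit Q S mult (mult y s)" by (simp only: rdiv_mult[OF L sQ yQ])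
  then show ?case by (rule orbit_trans[OF right(2)])
next
  case (right_inv y s)
  have yQ: "y \<in> Q" using orbit_sub[OF L SQ xQ] right_inv(1) by (rule subsetD)
  have sQ: "s \<in> Q" using SQ right_inv(3) by (rule subsetD)
  have "mult (rdiv Q mult y s) s \<in> orbit Q S mult (rdiv Q mult y s)"
    by (rule orbit.right[OF orbit.base right_inv(3)])
  then have "y \<in> orbit Q S mult (rdiv Q mult y s)" by (simp only: conjunct2[OF rdiv_props[OF L sQ yQ]])
  then show ?case by (rule orbit_trans[OF right_inv(2)])
qed

lemma orbit_eq:
  assumes L: "loop Q mult e" and SQ: "S \<subseteq> Q" and xQ: "x \<in> Q"
    and y: "y \<in> orbit Q S mult x"
  shows "orbit Q S mult y = orbit Q S mult x"
proof
  show "orbit Q S mult y \<subseteq> orbit Q S mult x"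
    using y by (auto intro: orbit_trans)
  show "orbit Q S mult x \<subseteq> orbit Q S mult y"
  proof
    fix z assume "z \<in> orbit Q S mult x"
    then show "z \<in> orbit Q S mult y" by (rule orbit_trans[OF _ orbit_sym[OF assms]])
  qed
qed

lemma orbit_disj:
  assumes L: "loop Q mult e" and SQ: "S \<subseteq> Q" and xQ: "x \<in> Q" and yQ: "y \<in> Q"
    and ne: "orbit Q S mult x \<noteq> orbit Q S mult y"
  shows "orbit Q S mult x \<inter> orbit Q S mult y = {}"
proof (rule ccontr)
  assume "orbit Q S mult x \<inter> orbit Q S mult y \<noteq> {}"
  then obtain z where z1: "z \<in> orbit Q S mult x" and z2: "z \<in> orbit Q S mult y" by blast
  have "orbit Q S mult z = orbit Q S mult x" by (rule orbit_eq[OF L SQ xQ z1])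
  moreover have "orbit Q S mult z = orbit Q S mult y" by (rule orbit_eq[OF L SQ yQ z2])
  ultimately
  show False using ne by simp
qed

theorem lemma5p3:
  fixes Q S :: "'a set" and mult :: "'a \<Rightarrow> 'a \<Rightarrow> 'a" and e :: 'a
  assumes "loop Q mult e" and "finite Q" and "subloop S Q mult e"
  shows "((\<forall>x\<in>Q. card S dvd card (orbit Q S mult x)) \<longrightarrow> card S dvd card Q)
       \<and> ((\<forall>x\<in>Q. \<exists>C. C \<subseteq> lcosets Q S mult \<and> pairwise disjnt C \<and> \<Union>C = orbit Q S mult x)
            \<longrightarrow> (\<exists>P. P \<subseteq> lcosets Q S mult \<and> pairwise disjnt P \<and> \<Union>P = Q))"
proof -
  note L = assms(1)
  have SQ: "S \<subseteq> Q" using assms(3) unfolding subloop_def by blast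
  define Os where "Os = (\<lambda>x. orbit Q S mult x) ` Q"
  have UO: "\<Union>Os = Q"
  proof
    show "\<Union>Os \<subseteq> Q" unfolding Os_def using orbit_sub[OF L SQ] by (auto simp del: orbit.simps)
    show "Q \<subseteq> \<Union>Os"
    proof
      fix x assume "x \<in> Q"
      moreover have "x \<in> orbit Q S mult x" by (rule orbit.base)
      ultimately show "x \<in> \<Union>Os" unfolding Os_def by blast
    qed
  qed
  have dO: "A \<inter> B = {}" if hA: "A \<in> Os" and hB: "B \<in> Os" and hne: "A \<noteq> B" for A B
  proof -
    obtain x y where "x \<in> Q" "y \<in> Q" "A = orbit Q S mult x" "B = orbit Q S mult y"
      using hA hB unfolding Os_def by auto
    then show ?thesis using orbit_disj[OF L SQ] hne by simp
  qed
  have pO: "pairwise disjnt Os" unfolding pairwise_def disjnt_def using dO by simp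
  have fin: "finite A" if hA: "A \<in> Os" for A
    using UO assms(2) hA by (metis Union_upper finite_subset)
  have part1: "(\<forall>x\<in>Q. card S dvd card (orbit Q S mult x)) \<longrightarrow> card S dvd card Q"
  proof
    assume H: "\<forall>x\<in>Q. card S dvd card (orbit Q S mult x)"
    have "card Q = (\<Sum>A\<in>Os. card A)"
      using card_Union_disjoint[OF pO fin] UO by simp
    also have "card S dvd \<dots>"
    proof (rule dvd_sum)
      fix A assume "A \<in> Os"
      then obtain x where "x \<in> Q" "A = orbit Q S mult x" unfolding Os_def by auto
      then show "card S dvd card A" using H by simp
    qed
    finally show "card S dvd card Q" .
  qed
  have part2: "(\<forall>x\<in>Q. \<exists>C. C \<subseteq> lcosets Q S mult \<and> pairwise disjnt C \<and> \<Union>C = orbit Q S mult x)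
            \<longrightarrow> (\<exists>P. P \<subseteq> lcosets Q S mult \<and> pairwise disjnt P \<and> \<Union>P = Q)"
  proof
    assume H: "\<forall>x\<in>Q. \<exists>C. C \<subseteq> lcosets Q S mult \<and> pairwise disjnt C \<and> \<Union>C = orbit Q S mult x"
    define Cof where "Cof W = (SOME C. C \<subseteq> lcosets Q S mult \<and> pairwise disjnt C \<and> \<Union>C = W)" for W
    have Cp: "Cof W \<subseteq> lcosets Q S mult \<and> pairwise disjnt (Cof W) \<and> \<Union>(Cof W) = W" if hW: "W \<in> Os" for W
    proof -
      obtain x where "x \<in> Q" "W = orbit Q S mult x" using hW unfolding Os_def by blast
      then have "\<exists>C. C \<subseteq> lcosets Q S mult \<and> pairwise disjnt C \<and> \<Union>C = W" using H by blast
      then show ?thesis unfolding Cof_def by (rule someI_ex)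
    qed
    define P where "P = (\<Union>W\<in>Os. Cof W)"
    have "P \<subseteq> lcosets Q S mult" unfolding P_def using Cp by blast
    moreover have "\<Union>P = Q"
    proof -
      have "\<Union>P = (\<Union>W\<in>Os. \<Union>(Cof W))" unfolding P_def by blast
      also have "\<dots> = (\<Union>W\<in>Os. W)" using Cp by (intro SUP_cong) auto
      also have "\<dots> = Q" using UO by simp
      finally show ?thesis .
    qed
    moreover have "pairwise disjnt P"
    proof (rule pairwiseI)
      fix A B assume A: "A \<in> P" and B: "B \<in> P" and ne: "A \<noteq> B"
      obtain W1 where W1: "W1 \<in> Os" "A \<in> Cof W1" using A unfolding P_def by blast
      obtain W2 where W2: "W2 \<in> Os" "B \<in> Cof W2" using B unfolding P_def by blast
      show "disjnt A B"
      proof (cases "W1 = W2")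
        case True
        then show ?thesis using Cp[OF W1(1)] W1 W2 ne unfolding pairwise_def by blast
      next
        case False
        have "A \<subseteq> W1" using Cp[OF W1(1)] W1(2) by blast
        moreover have "B \<subseteq> W2" using Cp[OF W2(1)] W2(2) by blast
        ultimately
        show ?thesis using dO[OF W1(1) W2(1) False] unfolding disjnt_def by blast
      qed
    qed
    ultimately show "\<exists>P. P \<subseteq> lcosets Q S mult \<and> pairwise disjnt P \<and> \<Union>P = Q" by blast
  qed
  show ?thesis using part1 part2 by blast
qed

end
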